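(* Assume that every increasing sequence of positive integers $x_1<x_2<x_3<\cdots$ with bounded gaps (i.e. there is a constant $K$ with $x_{n+1}-x_n\le K$ for all $n\ge1$) contains a double 3-term arithmetic progression. Then for every positive integer $r$ and every coloring of $\mathbb{N}$ with $r$ colors, there is a color class $A=\{a_1<a_2<a_3<\cdots\}$ (finite or infinite, listed in increasing order) that contains a double 3-term arithmetic progression, i.e. there are indices $i<j<k$ with $i+k=2j$ and $a_i+a_k=2a_j$. *)

theory Defs
  imports Main "HOL-Library.Infinite_Set"
begin

definition double3AP_seq :: "(nat \<Rightarrow> nat) \<Rightarrow> bool" where
  "double3AP_seq x \<longleftrightarrow>
     (\<exists>i j k. i < j \<and> j < k \<and> i + k = 2 * j \<and> x i + x k = 2 * x j)"

definition elem_at :: "nat set \<Rightarrow> nat \<Rightarrow> nat" where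
  "elem_at A i = (if finite A then sorted_list_of_set A ! i else enumerate A i)"

definition valid_idx :: "nat set \<Rightarrow> nat \<Rightarrow> bool" where
  "valid_idx A i \<longleftrightarrow> infinite A \<or> i < card A"

definition double3AP_set :: "nat set \<Rightarrow> bool" where
  "double3AP_set A \<longleftrightarrow>
     (\<exists>i j k. i < j \<and> j < k \<and> valid_idx A k \<and> i + k = 2 * j \<and>
              elem_at A i + elem_at A k = 2 * elem_at A j)"

end

theory Submission
  imports Defs
begin

definition ps :: "nat set \<Rightarrow> nat \<Rightarrow> bool" where
  "ps A K \<longleftrightarrow> (\<forall>L. \<exists>s. \<forall>t. s \<le> t \<and> t + K \<le> s + L \<longrightarrow> (\<exists>b\<in>A. t \<le> b \<and> b < t + K))"

lemma ps_split:
  assumes "ps B K" "B \<subseteq> A \<union> C" "\<not> (\<exists>K'. ps C K')"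
  shows "\<exists>K'. ps A K'"
proof -
  from assms(3) have "\<not> ps C K" by blast
  then obtain L where L: "\<forall>s. \<exists>t. s \<le> t \<and> t + K \<le> s + L \<and> \<not>(\<exists>b\<in>C. t \<le> b \<and> b < t + K)"
    unfolding ps_def by blast
  have "ps A L"
    unfolding ps_def
  proof
    fix L'
    from assms(1) obtain s where s: "\<forall>t. s \<le> t \<and> t + K \<le> s + L' \<longrightarrow> (\<exists>b\<in>B. t \<le> b \<and> b < t + K)"
      unfolding ps_def by blast
    show "\<exists>s. \<forall>t. s \<le> t \<and> t + L \<le> s + L' \<longrightarrow> (\<exists>b\<in>A. t \<le> b \<and> b < t + L)"
    proof (intro exI allI impI)
      fix t assume t: "s \<le> t \<and> t + L \<le> s + L'"
      from L obtain t' where t': "t \<le> t'" "t' + K \<le> t + L" "\<not>(\<exists>b\<in>C. t' \<le> b \<and> b < t' + K)"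
        by blast
      have "s \<le> t'" "t' + K \<le> s + L'" using t t' by linarith+
      with s obtain b where b: "b \<in> B" "t' \<le> b" "b < t' + K" by blast
      then have "b \<notin> C" using t'(3) by blast
      then have "b \<in> A" using b(1) assms(2) by blast
      moreover have "t \<le> b" "b < t + L" using b t' by linarith+
      ultimately show "\<exists>b\<in>A. t \<le> b \<and> b < t + L" by blast
    qed
  qed
  then show ?thesis by blast
qed

lemma ps_color:
  "\<And>B K. ps B K \<Longrightarrow> (\<forall>n\<in>B. c n < (r::nat)) \<Longrightarrow> \<exists>q<r. \<exists>K'. ps (B \<inter> {n. c n = q}) K'"
proof (induction r arbitrary: B K)
  case 0
  then have "B = {}" by auto
  with 0 obtain s where "\<forall>t. s \<le> t \<and> t + K \<le> s + K \<longrightarrow> (\<exists>b\<in>{}. t \<le> b \<and> b < t + K)"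
    unfolding ps_def by blast
  then have "\<exists>b\<in>{}. s \<le> b \<and> b < s + K" by blast
  then have False by blast
  then show ?case ..
next
  case (Suc r)
  show ?case
  proof (cases "\<exists>K'. ps (B \<inter> {n. c n = r}) K'")
    case True then show ?thesis by blast
  next
    case False
    have "B \<subseteq> (B \<inter> {n. c n < r}) \<union> (B \<inter> {n. c n = r})" using Suc.prems by auto
    from ps_split[OF Suc.prems(1) this False] obtain K' where "ps (B \<inter> {n. c n < r}) K'" by blast
    from Suc.IH[OF this] obtain q K'' where "q < r" "ps (B \<inter> {n. c n < r} \<inter> {n. c n = q}) K''" by auto
    moreover have "B \<inter> {n. c n < r} \<inter> {n. c n = q} = B \<inter> {n. c n = q}" using \<open>q<r\<close> by auto
    ultimately show ?thesis by (metis less_SucI)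
  qed
qed

definition XX :: "(nat \<Rightarrow> nat) \<Rightarrow> nat \<Rightarrow> nat" where
  "XX e t = 1 + (\<Sum>u<t. e u)"

definition free :: "(nat \<Rightarrow> nat) \<Rightarrow> nat \<Rightarrow> bool" where
  "free e N \<longleftrightarrow> (\<forall>i j k. i < j \<longrightarrow> j < k \<longrightarrow> k \<le> N \<longrightarrow> i + k = 2 * j \<longrightarrow> XX e i + XX e k \<noteq> 2 * XX e j)"

definition good :: "nat \<Rightarrow> (nat \<Rightarrow> nat) \<Rightarrow> nat \<Rightarrow> nat \<Rightarrow> (nat \<Rightarrow> nat) \<Rightarrow> bool" where
  "good K d n N e \<longleftrightarrow> (\<forall>u<n. e u = d u) \<and> (\<forall>u. 1 \<le> e u \<and> e u \<le> K) \<and> free e N"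

definition ext :: "nat \<Rightarrow> (nat \<Rightarrow> nat) \<Rightarrow> nat \<Rightarrow> bool" where
  "ext K d n \<longleftrightarrow> (\<forall>N. \<exists>e. good K d n N e)"

lemma free_mono: assumes "free e N" "M \<le> N" shows "free e M"
  unfolding free_def
proof (intro allI impI)
  fix i j k assume h: "i < j" "j < k" "k \<le> M" "i + k = 2 * j"
  then have "k \<le> N" using assms(2) by simp
  with h assms(1) show "XX e i + XX e k \<noteq> 2 * XX e j" unfolding free_def by blast
qed

lemma XX_cong: "(\<forall>u<N. e u = e' u) \<Longrightarrow> t \<le> N \<Longrightarrow> XX e t = XX e' t"
  unfolding XX_def by (intro arg_cong[where f="\<lambda>x. 1 + x"] sum.cong) auto

lemma free_cong: assumes a: "\<forall>u<N. e u = e' u" and f: "free e N" shows "free e' N"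
  unfolding free_def
proof (intro allI impI)
  fix i j k assume h: "i < j" "j < k" "k \<le> N" "i + k = 2 * j"
  have "i \<le> N" "j \<le> N" using h by linarith+
  then have "XX e i = XX e' i" "XX e j = XX e' j" "XX e k = XX e' k"
    using XX_cong[OF a] h(3) by blast+
  with h f show "XX e' i + XX e' k \<noteq> 2 * XX e' j" unfolding free_def by metis
qed

lemma ext_step:
  assumes "ext K d n"
  shows "\<exists>g. 1 \<le> g \<and> g \<le> K \<and> ext K (d(n:=g)) (Suc n)"
proof (rule ccontr)
  assume c: "\<not> ?thesis"
  have "\<exists>N. 1 \<le> g \<and> g \<le> K \<longrightarrow> (\<forall>e. \<not> good K (d(n:=g)) (Suc n) N e)" for g
  proof (cases "1 \<le> g \<and> g \<le> K")
    case True
    then have "\<not> ext K (d(n:=g)) (Suc n)" using c by blast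
    then show ?thesis unfolding ext_def by blast
  next
    case False then show ?thesis by blast
  qed
  then obtain Nf where Nf: "\<And>g e. 1 \<le> g \<Longrightarrow> g \<le> K \<Longrightarrow> \<not> good K (d(n:=g)) (Suc n) (Nf g) e"
    by metis
  define M where "M = (\<Sum>g\<le>K. Nf g)"
  from assms obtain e where "good K d n M e" unfolding ext_def by blast
  then have e: "\<forall>u<n. e u = d u" "\<forall>u. 1 \<le> e u \<and> e u \<le> K" "free e M"
    unfolding good_def by auto
  define g where "g = e n"
  have g: "1 \<le> g" "g \<le> K" using e(2) g_def by auto
  have "Nf g \<le> M" unfolding M_def using g by (intro member_le_sum) auto
  then have "free e (Nf g)" using e(3) free_mono by blast
  moreover have "\<forall>u<Suc n. e u = (d(n:=g)) u" using e(1) g_def by (auto simp: less_Suc_eq)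
  ultimately have "good K (d(n:=g)) (Suc n) (Nf g) e" unfolding good_def using e(2) by blast
  then show False using Nf[OF g] by blast
qed

lemma compact:
  assumes hyp: "\<forall>x :: nat \<Rightarrow> nat.
                  strict_mono x \<and> (\<forall>n. 0 < x n) \<and> (\<exists>K. \<forall>n. x (Suc n) - x n \<le> K)
                  \<longrightarrow> double3AP_seq x"
  shows "\<exists>N. \<forall>e. (\<forall>u. 1 \<le> e u \<and> e u \<le> K) \<longrightarrow> \<not> free e N"
proof (rule ccontr)
  assume "\<not> ?thesis"
  then have ext0: "ext K d 0" for d unfolding ext_def good_def by auto
  define D where "D = rec_nat (\<lambda>_. 1::nat) (\<lambda>n f. f(n := SOME g. 1 \<le> g \<and> g \<le> K \<and> ext K (f(n:=g)) (Suc n)))"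
  have D0: "D 0 = (\<lambda>_. 1)" unfolding D_def by simp
  have DS: "D (Suc n) = (D n)(n := SOME g. 1 \<le> g \<and> g \<le> K \<and> ext K ((D n)(n:=g)) (Suc n))" for n
    unfolding D_def by simp
  have extD: "ext K (D n) n" for n
  proof (induction n)
    case 0 show ?case using ext0 .
  next
    case (Suc n)
    from someI_ex[OF ext_step[OF Suc.IH]] show ?case unfolding DS by blast
  qed
  have bnd: "1 \<le> D (Suc u) u \<and> D (Suc u) u \<le> K" for u
    using someI_ex[OF ext_step[OF extD[of u]]] unfolding DS by simp
  have stab: "u < m \<Longrightarrow> D m u = D (Suc u) u" for u m
  proof (induction m)
    case 0 then show ?case by simp
  next
    case (Suc m)
    show ?case
    proof (cases "u = m")
      case True then show ?thesis by simp
    next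
      case False
      then have "u < m" using Suc.prems by simp
      then show ?thesis using Suc.IH False unfolding DS[of m] by simp
    qed
  qed
  define E where "E u = D (Suc u) u" for u
  have freeE: "free E N" for N
  proof -
    from extD[of "Suc N"] obtain e where "good K (D (Suc N)) (Suc N) N e"
      unfolding ext_def by blast
    then have e: "\<forall>u<Suc N. e u = D (Suc N) u" "free e N" unfolding good_def by auto
    have "\<forall>u<N. e u = E u"
    proof (intro allI impI)
      fix u assume "u < N"
      then have "u < Suc N" by simp
      then have "e u = D (Suc N) u" using e(1) by blast
      also have "\<dots> = D (Suc u) u" using stab[of u "Suc N"] \<open>u < N\<close> by simp
      finally show "e u = E u" unfolding E_def .
    qed
    then show ?thesis using free_cong e(2) by blast
  qed
  have XS: "XX E (Suc n) = XX E n + E n" for n unfolding XX_def by simp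
  have "strict_mono (XX E)"
    unfolding strict_mono_Suc_iff using XS bnd E_def by (simp add: Suc_le_eq)
  moreover have "\<forall>n. 0 < XX E n" unfolding XX_def by simp
  moreover have "\<forall>n. XX E (Suc n) - XX E n \<le> K" using XS bnd E_def by simp
  ultimately have "double3AP_seq (XX E)" using hyp by blast
  then obtain i j k where "i < j" "j < k" "i + k = 2 * j" "XX E i + XX E k = 2 * XX E j"
    unfolding double3AP_seq_def by blast
  with freeE[of k] show False unfolding free_def by blast
qed

lemma enum_next:
  assumes "infinite (A::nat set)" "b \<in> A" "enumerate A n < b"
  shows "enumerate A (Suc n) \<le> b"
  unfolding enumerate_Suc''[OF assms(1)] by (rule Least_le) (use assms in auto)

lemma ps_pos: assumes "ps A K" shows "0 < K"
proof (rule ccontr)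
  assume "\<not> 0 < K"
  then have K: "K = 0" by simp
  from assms obtain s where "\<forall>t. s \<le> t \<and> t + K \<le> s + 0 \<longrightarrow> (\<exists>b\<in>A. t \<le> b \<and> b < t + K)"
    unfolding ps_def by blast
  then have "\<exists>b\<in>A. s \<le> b \<and> b < s + K" using K by simp
  then show False using K by auto
qed

lemma ps_infinite: assumes "ps A K" shows "infinite A"
proof -
  have "\<exists>a\<in>A. b \<le> a" for b
  proof -
    from assms obtain s where s: "\<forall>t. s \<le> t \<and> t + K \<le> s + (b + K) \<longrightarrow> (\<exists>a\<in>A. t \<le> a \<and> a < t + K)"
      unfolding ps_def by blast
    from s[rule_format, of "s + b"] show ?thesis using le_add2 le_trans by fastforce
  qed
  then have "\<forall>m. \<exists>n\<ge>m. n \<in> A" by blast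
  then show ?thesis unfolding infinite_nat_iff_unbounded_le .
qed

lemma ps_double:
  assumes hyp: "\<forall>x :: nat \<Rightarrow> nat.
                  strict_mono x \<and> (\<forall>n. 0 < x n) \<and> (\<exists>K. \<forall>n. x (Suc n) - x n \<le> K)
                  \<longrightarrow> double3AP_seq x"
    and psA: "ps A K"
  shows "double3AP_set A"
proof -
  have inf: "infinite A" using ps_infinite[OF psA] .
  have K0: "0 < K" using ps_pos[OF psA] .
  from compact[OF hyp, of K] obtain N where N: "\<And>e. (\<forall>u. 1 \<le> e u \<and> e u \<le> K) \<Longrightarrow> \<not> free e N" by blast
  define L where "L = (N + 3) * (K + 1)"
  from psA obtain s where s: "\<And>t. s \<le> t \<Longrightarrow> t + K \<le> s + L \<Longrightarrow> (\<exists>b\<in>A. t \<le> b \<and> b < t + K)"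
    unfolding ps_def by blast
  have "s + K \<le> s + L" unfolding L_def by (simp add: algebra_simps)
  from s[OF order_refl this] obtain a0 where a0: "a0 \<in> A" "s \<le> a0" "a0 < s + K" by blast
  from enumerate_Ex[OF inf a0(1)] obtain m where m: "enumerate A m = a0" by blast
  define v where "v t = enumerate A (m + t)" for t
  have vmono: "v t < v (Suc t)" for t unfolding v_def using enumerate_step[OF inf] by simp
  have vge: "a0 \<le> v t" for t unfolding v_def m[symmetric] using inf by simp
  have step: "v (Suc t) \<le> v t + K" if "v t + 1 + K \<le> s + L" for t
  proof -
    have "s \<le> v t + 1" using vge[of t] a0(2) by simp
    from s[OF this] that obtain b where "b \<in> A" "v t + 1 \<le> b" "b < v t + 1 + K" by auto
    then show ?thesis using enum_next[OF inf, of b "m + t"] unfolding v_def by simp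
  qed
  have bound: "t \<le> N \<Longrightarrow> v t \<le> a0 + t * K" for t
  proof (induction t)
    case 0 then show ?case using m v_def by simp
  next
    case (Suc t)
    then have vt: "v t \<le> a0 + t * K" by simp
    have "t * K \<le> N * K" using Suc.prems by simp
    moreover have "N * K + K + 1 + K + K \<le> L" unfolding L_def by (simp add: algebra_simps)
    ultimately have "v t + 1 + K \<le> s + L" using vt a0(3) by linarith
    then show ?case using step[of t] vt by simp
  qed
  have gap: "t < N \<Longrightarrow> v (Suc t) \<le> v t + K" for t
  proof -
    assume t: "t < N"
    then have vt: "v t \<le> a0 + t * K" using bound by simp
    have "t * K \<le> N * K" using t by simp
    moreover have "N * K + K + 1 + K + K \<le> L" unfolding L_def by (simp add: algebra_simps)
    ultimately have "v t + 1 + K \<le> s + L" using vt a0(3) by linarith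
    then show ?thesis using step by blast
  qed
  define e where "e u = (if u < N then v (Suc u) - v u else 1)" for u
  have ebnd: "\<forall>u. 1 \<le> e u \<and> e u \<le> K"
  proof
    fix u
    show "1 \<le> e u \<and> e u \<le> K"
    proof (cases "u < N")
      case True
      have "v u < v (Suc u)" "v (Suc u) \<le> v u + K" using vmono gap[OF True] by auto
      then have "1 \<le> v (Suc u) - v u \<and> v (Suc u) - v u \<le> K" by arith
      then show ?thesis unfolding e_def using True by simp
    next
      case False then show ?thesis unfolding e_def using K0 by simp
    qed
  qed
  have Xv: "t \<le> N \<Longrightarrow> XX e t + v 0 = 1 + v t" for t
  proof (induction t)
    case 0 then show ?case unfolding XX_def by simp
  next
    case (Suc t)
    then have "XX e t + v 0 = 1 + v t" by simp
    moreover have "e t = v (Suc t) - v t" using Suc.prems unfolding e_def by simp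
    moreover have "XX e (Suc t) = XX e t + e t" unfolding XX_def by simp
    ultimately show ?case using vmono[of t] by simp
  qed
  from N[OF ebnd] obtain i j k where ijk: "i < j" "j < k" "k \<le> N" "i + k = 2 * j"
    "XX e i + XX e k = 2 * XX e j" unfolding free_def by blast
  have "v i + v k = 2 * v j"
    using ijk Xv[of i] Xv[of j] Xv[of k] by simp
  moreover have "elem_at A t = enumerate A t" for t unfolding elem_at_def using inf by simp
  ultimately have "elem_at A (m+i) + elem_at A (m+k) = 2 * elem_at A (m+j)"
    unfolding v_def by simp
  moreover have "m+i < m+j" "m+j < m+k" "(m+i) + (m+k) = 2 * (m+j)" "valid_idx A (m+k)"
    using ijk inf unfolding valid_idx_def by auto
  ultimately show ?thesis unfolding double3AP_set_def by (intro exI[of _ "m+i"] exI[of _ "m+j"] exI[of _ "m+k"]) simp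
qed

theorem proposition1:
  assumes hyp: "\<forall>x :: nat \<Rightarrow> nat.
                  strict_mono x \<and> (\<forall>n. 0 < x n) \<and> (\<exists>K. \<forall>n. x (Suc n) - x n \<le> K)
                  \<longrightarrow> double3AP_seq x"
    and r: "0 < r"
    and col: "\<forall>n. 0 < n \<longrightarrow> c n < (r :: nat)"
  shows "\<exists>q < r. double3AP_set {n. 0 < n \<and> c n = q}"
proof -
  have "ps {n. 0 < n} 1" unfolding ps_def
  proof (intro allI exI[of _ 1] impI)
    fix L t :: nat assume "1 \<le> t \<and> t + 1 \<le> 1 + L"
    then have "t \<in> {n. 0 < n} \<and> t \<le> t \<and> t < t + 1" by simp
    then show "\<exists>b\<in>{n. 0 < n}. t \<le> b \<and> b < t + 1" by blast
  qed
  from ps_color[OF this, of c r] col obtain q K where "q < r" "ps ({n. 0 < n} \<inter> {n. c n = q}) K"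
    by auto
  moreover have "{n. 0 < n} \<inter> {n. c n = q} = {n. 0 < n \<and> c n = q}" by auto
  ultimately have "q < r" "ps {n. 0 < n \<and> c n = q} K" by auto
  then have "double3AP_set {n. 0 < n \<and> c n = q}" using ps_double[OF hyp] by blast
  then show ?thesis using \<open>q < r\<close> by blast
qed

end
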